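(* Let $f\colon\mathbb{N}\to\mathbb{R}$ be a superlinear function with $f(r)\geq 1+3r$ for all $r\in\mathbb{N}$. Then every finite graph $G$ is a minor of a finite graph $\tilde G$ with growth $f_{\tilde G}(r)\leq f(r)$ for every positive integer $r$.
   Context: $\mathbb{N}$ is the set of positive integers. A function $f\colon\mathbb{N}\to\mathbb{R}$ is superlinear if $f(x)/x\to\infty$ as $x\to\infty$. The growth of a finite graph $G$ is the function $f_G\colon\mathbb{N}\to\mathbb{N}$ where $f_G(r)$ is the maximum of $|V(H)|$ over all subgraphs $H$ of $G$ of radius at most $r$. A graph $H$ is a minor of $G$ if $H$ is isomorphic to a graph obtained from a subgraph of $G$ by contracting edges. *)

theory Defs
  imports Complex_Main
begin

type_synonym 'a graph = "'a set \<times> 'a set set"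

definition verts :: "'a graph \<Rightarrow> 'a set" where "verts G = fst G"
definition edges :: "'a graph \<Rightarrow> 'a set set" where "edges G = snd G"

definition finite_graph :: "'a graph \<Rightarrow> bool" where
  "finite_graph G \<longleftrightarrow> finite (verts G) \<and>
     (\<forall>e\<in>edges G. e \<subseteq> verts G \<and> card e = 2)"

definition subgraph :: "'a graph \<Rightarrow> 'a graph \<Rightarrow> bool" where
  "subgraph H G \<longleftrightarrow> verts H \<subseteq> verts G \<and> edges H \<subseteq> edges G \<and>
     (\<forall>e\<in>edges H. e \<subseteq> verts H)"

text \<open>\<open>walk_within H x y n\<close>: y is reachable from x in H by a walk of length at most n.\<close>
inductive walk_within :: "'a graph \<Rightarrow> 'a \<Rightarrow> 'a \<Rightarrow> nat \<Rightarrow> bool" for H where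
  here: "x \<in> verts H \<Longrightarrow> walk_within H x x n"
| step: "{x, z} \<in> edges H \<Longrightarrow> walk_within H z y n \<Longrightarrow> walk_within H x y (Suc n)"

definition radius_le :: "'a graph \<Rightarrow> nat \<Rightarrow> bool" where
  "radius_le H r \<longleftrightarrow> (\<exists>c\<in>verts H. \<forall>v\<in>verts H. walk_within H c v r)"

definition growth :: "'a graph \<Rightarrow> nat \<Rightarrow> nat" where
  "growth G r = Max (insert 0 {card (verts H) | H. subgraph H G \<and> radius_le H r})"

text \<open>Contracting the edge {u,v}: v is merged into u (loops removed, parallel edges merged).\<close>
definition contract :: "'a graph \<Rightarrow> 'a \<Rightarrow> 'a \<Rightarrow> 'a graph" where
  "contract G u v = (verts G - {v},
     {e'. \<exists>e\<in>edges G. e' = (\<lambda>x. if x = v then u else x) ` e \<and> card e' = 2})"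

inductive contracts_to :: "'a graph \<Rightarrow> 'a graph \<Rightarrow> bool" where
  refl: "contracts_to G G"
| step: "contracts_to G H \<Longrightarrow> {u, v} \<in> edges H \<Longrightarrow> u \<noteq> v \<Longrightarrow>
     contracts_to G (contract H u v)"

definition graph_iso :: "'b graph \<Rightarrow> 'a graph \<Rightarrow> bool" where
  "graph_iso H K \<longleftrightarrow> (\<exists>\<phi>. bij_betw \<phi> (verts H) (verts K) \<and>
     (\<forall>x\<in>verts H. \<forall>y\<in>verts H. {x, y} \<in> edges H \<longleftrightarrow> {\<phi> x, \<phi> y} \<in> edges K))"

definition minor :: "'b graph \<Rightarrow> 'a graph \<Rightarrow> bool" where
  "minor H G \<longleftrightarrow> (\<exists>S K. subgraph S G \<and> contracts_to S K \<and> graph_iso H K)"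

definition superlinear :: "(nat \<Rightarrow> real) \<Rightarrow> bool" where
  "superlinear f \<longleftrightarrow> filterlim (\<lambda>x. f x / real x) at_top sequentially"

end

theory Submission
  imports Defs "HOL-Library.Countable"
begin

lemma walk_verts:
  assumes "\<forall>e\<in>edges G. e \<subseteq> verts G" "walk_within G x y n"
  shows "x \<in> verts G \<and> y \<in> verts G"
  using assms(2) by induction (use assms(1) in auto)

lemma walk_zero: "walk_within G x y 0 \<Longrightarrow> x = y"
  by (erule walk_within.cases) auto

lemma walk_Suc: "walk_within G x y n \<Longrightarrow> walk_within G x y (Suc n)"
proof (induction rule: walk_within.induct)
  case (here x n)
  then show ?case by (rule walk_within.here)
next
  case (step x z y n)
  then show ?case using walk_within.step[of x z G y "Suc n"] by simp
qed

lemma walk_add: "walk_within G x y n \<Longrightarrow> walk_within G x y (n + k)"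
  by (induction k) (auto intro: walk_Suc)

lemma walk_mono: "walk_within G x y n \<Longrightarrow> n \<le> m \<Longrightarrow> walk_within G x y m"
  using walk_add[of G x y n "m - n"] by simp

lemma walk_snoc:
  assumes E: "\<forall>e\<in>edges G. e \<subseteq> verts G" and "walk_within G x y n" "{y,w} \<in> edges G"
  shows "walk_within G x w (Suc n)"
  using assms(2,3)
proof (induction rule: walk_within.induct)
  case (here x n)
  then have "w \<in> verts G" using E by auto
  then have "walk_within G w w n" by (rule walk_within.here)
  with here show ?case using walk_within.step[of x w G w n] by simp
next
  case (step x z y n)
  then show ?case by (simp add: walk_within.step)
qed

lemma walk_last_aux:
  assumes E: "\<forall>e\<in>edges G. e \<subseteq> verts G"
  shows "walk_within G x v m \<Longrightarrow> \<forall>n. m = Suc n \<longrightarrow>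
     walk_within G x v n \<or> (\<exists>w. walk_within G x w n \<and> {w,v} \<in> edges G)"
proof (induction rule: walk_within.induct)
  case (here x m)
  have "walk_within G x x n" for n using here by (rule walk_within.here)
  then show ?case by blast
next
  case (step x z y m)
  show ?case
  proof (intro allI impI)
    fix n assume "Suc m = Suc n"
    then have m: "m = n" by simp
    show "walk_within G x y n \<or> (\<exists>w. walk_within G x w n \<and> {w, y} \<in> edges G)"
    proof (cases n)
      case 0
      have "z = y" using walk_zero[of G z y] step(2) m 0 by simp
      moreover have "x \<in> verts G" using step(1) E by auto
      then have "walk_within G x x 0" by (rule walk_within.here)
      ultimately show ?thesis using step(1) 0 by blast
    next
      case (Suc n')
      with step.IH m have "walk_within G z y n' \<or> (\<exists>w. walk_within G z w n' \<and> {w,y} \<in> edges G)"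
        by blast
      then show ?thesis using step(1) Suc walk_within.step[of x z G] by blast
    qed
  qed
qed

lemma walk_last:
  assumes "\<forall>e\<in>edges G. e \<subseteq> verts G" "walk_within G x v (Suc n)"
  shows "walk_within G x v n \<or> (\<exists>w. walk_within G x w n \<and> {w,v} \<in> edges G)"
  using walk_last_aux[OF assms(1) assms(2)] by blast

lemma walk_sym:
  assumes E: "\<forall>e\<in>edges G. e \<subseteq> verts G"
  shows "walk_within G x y n \<Longrightarrow> walk_within G y x n"
proof (induction rule: walk_within.induct)
  case (here x n)
  then show ?case by (rule walk_within.here)
next
  case (step x z y n)
  then show ?case using walk_snoc[OF E, of y z n x] by (simp add: insert_commute)
qed

lemma walk_trans:
  "walk_within G x y n \<Longrightarrow> walk_within G y z m \<Longrightarrow> walk_within G x z (n + m)"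
proof (induction rule: walk_within.induct)
  case (here x n)
  then show ?case using walk_mono by fastforce
next
  case (step x z' y n)
  then show ?case by (simp add: walk_within.step)
qed

lemma walk_subgraph:
  "walk_within H x y n \<Longrightarrow> subgraph H G \<Longrightarrow> walk_within G x y n"
proof (induction rule: walk_within.induct)
  case (here x n)
  then show ?case by (auto simp: subgraph_def intro!: walk_within.here)
next
  case (step x z y n)
  then show ?case using walk_within.step[of x z G y n] by (auto simp: subgraph_def)
qed

definition nbrs :: "'v graph \<Rightarrow> 'v \<Rightarrow> 'v set" where
  "nbrs G v = {w. {v, w} \<in> edges G}"

definition ball :: "'v graph \<Rightarrow> 'v \<Rightarrow> nat \<Rightarrow> 'v set" where
  "ball G c n = {v. walk_within G c v n}"

lemma ball_bound:
  fixes G :: "'v graph" and Br :: "'v set"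
  assumes fg: "finite_graph G"
    and deg3: "\<forall>v\<in>verts G. card (nbrs G v) \<le> 3"
    and deg2: "\<forall>v\<in>verts G - Br. card (nbrs G v) \<le> 2"
    and sep: "\<forall>b1\<in>Br. \<forall>b2\<in>Br. \<forall>n. b1 \<noteq> b2 \<longrightarrow> walk_within G b1 b2 n \<longrightarrow> L \<le> n"
    and c: "c \<in> verts G" and r: "2 * r \<le> L"
  shows "card (ball G c r) \<le> 1 + 3 * r"
proof -
  have E: "\<forall>e\<in>edges G. e \<subseteq> verts G" using fg by (auto simp: finite_graph_def)
  have finV: "finite (verts G)" using fg by (auto simp: finite_graph_def)
  define W where "W k = ball G c k" for k
  define D where "D k = W (Suc k) - W k" for k
  have Wsub: "W k \<subseteq> verts G" for k
    using walk_verts[OF E] by (auto simp: W_def ball_def)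
  have finW: "finite (W k)" for k using Wsub finV finite_subset by blast
  have Wmono: "k \<le> k' \<Longrightarrow> W k \<subseteq> W k'" for k k'
    unfolding W_def ball_def using walk_mono[of G c _ k k'] by blast
  have W0: "W 0 = {c}"
    using walk_zero[of G c] c walk_within.here[of c G 0] unfolding W_def ball_def by blast
  have nbsub: "nbrs G v \<subseteq> verts G" for v using E by (auto simp: nbrs_def)
  have finN: "finite (nbrs G v)" for v using nbsub finV finite_subset by blast
  have snoc: "v \<in> W k \<Longrightarrow> {v, w} \<in> edges G \<Longrightarrow> w \<in> W (Suc k)" for v w k
    using walk_snoc[OF E] by (auto simp: W_def ball_def)
  have last: "v \<in> W (Suc k) \<Longrightarrow> v \<in> W k \<or> (\<exists>w\<in>W k. {w, v} \<in> edges G)" for v k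
    using walk_last[OF E] by (auto simp: W_def ball_def)
  have degb: "card (nbrs G v) \<le> 2 + (if v \<in> Br then 1 else 0)" if "v \<in> verts G" for v
    using deg3 deg2 that by (cases "v \<in> Br") auto
  have key: "card (D k) \<le> 2 + card (W k \<inter> Br)" for k
  proof (induction k)
    case 0
    have "D 0 \<subseteq> nbrs G c"
    proof
      fix v assume "v \<in> D 0"
      then have "v \<in> W 1" "v \<notin> W 0" by (auto simp: D_def)
      then obtain w where "w \<in> W 0" "{w, v} \<in> edges G" using last[of v 0] by auto
      then show "v \<in> nbrs G c" using W0 by (auto simp: nbrs_def)
    qed
    then have "card (D 0) \<le> card (nbrs G c)" using finN card_mono by blast
    also have "\<dots> \<le> 2 + card (W 0 \<inter> Br)"
      using degb[OF c] W0 by (cases "c \<in> Br") auto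
    finally show ?case .
  next
    case (Suc k)
    define A where "A w = nbrs G w - W k" for w
    have sub: "D (Suc k) \<subseteq> (\<Union>w\<in>D k. A w)"
    proof
      fix v assume "v \<in> D (Suc k)"
      then have v1: "v \<in> W (Suc (Suc k))" and v2: "v \<notin> W (Suc k)" by (auto simp: D_def)
      then obtain w where w: "w \<in> W (Suc k)" "{w, v} \<in> edges G" using last[of v "Suc k"] by auto
      have "w \<notin> W k" using snoc[of w k v] w v2 by auto
      moreover have "v \<notin> W k" using v2 Wmono[of k "Suc k"] by auto
      ultimately show "v \<in> (\<Union>w\<in>D k. A w)" using w by (auto simp: D_def A_def nbrs_def)
    qed
    have cA: "card (A w) \<le> 1 + (if w \<in> Br then 1 else 0)" if "w \<in> D k" for w
    proof -
      have "w \<in> W (Suc k)" "w \<notin> W k" using that by (auto simp: D_def)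
      then obtain u where u: "u \<in> W k" "{u, w} \<in> edges G" using last[of w k] by auto
      then have "u \<in> nbrs G w" by (auto simp: nbrs_def insert_commute)
      then have "A w \<subseteq> nbrs G w - {u}" using u by (auto simp: A_def)
      then have "card (A w) \<le> card (nbrs G w - {u})" using finN by (intro card_mono) auto
      also have "\<dots> = card (nbrs G w) - 1" using \<open>u \<in> nbrs G w\<close> finN by simp
      also have "\<dots> \<le> 1 + (if w \<in> Br then 1 else 0)"
      proof -
        have "w \<in> verts G" using Wsub[of "Suc k"] \<open>w \<in> W (Suc k)\<close> by blast
        then show ?thesis using degb[of w] by simp
      qed
      finally show ?thesis .
    qed
    have finD: "finite (D k)" using finW by (auto simp: D_def)
    have "card (D (Suc k)) \<le> card (\<Union>w\<in>D k. A w)"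
      using sub finD finN by (intro card_mono) (auto simp: A_def)
    also have "\<dots> \<le> (\<Sum>w\<in>D k. card (A w))" by (rule card_UN_le[OF finD])
    also have "\<dots> \<le> (\<Sum>w\<in>D k. 1 + (if w \<in> Br then 1 else 0))"
      using cA by (intro sum_mono) auto
    also have "\<dots> = card (D k) + card (D k \<inter> Br)"
    proof -
      have "(\<Sum>w\<in>D k. (if w \<in> Br then 1 else 0::nat)) = (\<Sum>w\<in>{w\<in>D k. w \<in> Br}. 1)"
        by (rule sum.inter_filter[OF finD, symmetric])
      also have "\<dots> = card (D k \<inter> Br)" by (simp add: Int_def)
      finally show ?thesis by (simp add: sum_Suc)
    qed
    also have "\<dots> \<le> 2 + card (W k \<inter> Br) + card (D k \<inter> Br)" using Suc.IH by simp
    finally have c1: "card (D (Suc k)) \<le> 2 + card (W k \<inter> Br) + card (D k \<inter> Br)" .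
    have "card (W k \<inter> Br) + card (D k \<inter> Br) = card (W (Suc k) \<inter> Br)"
    proof -
      have "W (Suc k) \<inter> Br = (W k \<inter> Br) \<union> (D k \<inter> Br)"
        using Wmono[of k "Suc k"] by (auto simp: D_def)
      moreover have "(W k \<inter> Br) \<inter> (D k \<inter> Br) = {}" by (auto simp: D_def)
      ultimately show ?thesis using finW finD by (simp add: card_Un_disjoint)
    qed
    with c1 show ?case by linarith

  qed
  show ?thesis
  proof (cases r)
    case 0
    then show ?thesis using W0 unfolding W_def by simp
  next
    case (Suc r')
    have one: "card (W r' \<inter> Br) \<le> 1"
    proof -
      have "\<forall>a\<in>W r' \<inter> Br. \<forall>b\<in>W r' \<inter> Br. a = b"
      proof (intro ballI, rule ccontr)
        fix a b assume a: "a \<in> W r' \<inter> Br" and b: "b \<in> W r' \<inter> Br" and ab: "a \<noteq> b"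
        have wa: "walk_within G c a r'" and wb: "walk_within G c b r'" using a b by (auto simp: W_def ball_def)
        have "walk_within G a c r'" by (rule walk_sym[OF E wa])
        then have "walk_within G a b (r' + r')" using wb by (rule walk_trans)
        moreover have "a \<in> Br" "b \<in> Br" using a b by auto
        ultimately have "L \<le> r' + r'" using sep ab by blast
        then show False using r Suc by simp
      qed
      then show ?thesis using finW by (simp add: card_le_Suc0_iff_eq)
    qed
    have D3: "card (D k) \<le> 3" if "k \<le> r'" for k
    proof -
      have "card (W k \<inter> Br) \<le> card (W r' \<inter> Br)"
        using Wmono[OF that] finW by (intro card_mono) auto
      then show ?thesis using key[of k] one by simp
    qed
    have "k \<le> r \<Longrightarrow> card (W k) \<le> 1 + 3 * k" for k
    proof (induction k)
      case 0
      then show ?case using W0 by simp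
    next
      case (Suc k)
      have "card (W (Suc k)) = card (W k) + card (D k)"
      proof -
        have "W (Suc k) = W k \<union> D k" using Wmono[of k "Suc k"] by (auto simp: D_def)
        moreover have "W k \<inter> D k = {}" by (auto simp: D_def)
        moreover have "card (W k \<union> D k) = card (W k) + card (D k)"
          by (rule card_Un_disjoint) (use finW in \<open>auto simp: D_def\<close>)
        ultimately show ?thesis by simp
      qed
      then show ?case using Suc D3[of k] \<open>r = Suc r'\<close> by simp
    qed
    then show ?thesis by (simp add: W_def)
  qed
qed

lemma growth_le:
  assumes fg: "finite_graph G"
    and H: "\<And>H. subgraph H G \<Longrightarrow> radius_le H r \<Longrightarrow> card (verts H) \<le> B"
  shows "growth G r \<le> B"
proof -
  let ?S = "{card (verts H) | H. subgraph H G \<and> radius_le H r}"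
  have finV: "finite (verts G)" using fg by (auto simp: finite_graph_def)
  have "?S \<subseteq> {..card (verts G)}"
    using finV by (auto simp: subgraph_def intro: card_mono)
  then have fin: "finite (insert 0 ?S)" by (meson finite_atMost finite_insert finite_subset)
  show ?thesis unfolding growth_def using fin H by (subst Max_le_iff) auto
qed

lemma growth_ge:
  assumes fg: "finite_graph G" and "subgraph H G" "radius_le H r"
  shows "card (verts H) \<le> growth G r"
proof -
  let ?S = "{card (verts H) | H. subgraph H G \<and> radius_le H r}"
  have finV: "finite (verts G)" using fg by (auto simp: finite_graph_def)
  have "?S \<subseteq> {..card (verts G)}"
    using finV by (auto simp: subgraph_def intro: card_mono)
  then have fin: "finite (insert 0 ?S)" by (meson finite_atMost finite_insert finite_subset)
  have "card (verts H) \<in> insert 0 ?S" using assms by blast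
  then show ?thesis unfolding growth_def using fin by (intro Max_ge) auto
qed

lemma growth_le_card: "finite_graph G \<Longrightarrow> growth G r \<le> card (verts G)"
  by (rule growth_le) (auto simp: finite_graph_def subgraph_def intro: card_mono)

lemma growth_le_ball:
  assumes fg: "finite_graph G" and "\<forall>c\<in>verts G. card (ball G c r) \<le> B"
  shows "growth G r \<le> B"
proof (rule growth_le[OF fg])
  fix H assume sg: "subgraph H G" and "radius_le H r"
  then obtain c where c: "c \<in> verts H" and all: "\<forall>v\<in>verts H. walk_within H c v r"
    by (auto simp: radius_le_def)
  have cG: "c \<in> verts G" using c sg by (auto simp: subgraph_def)
  have "verts H \<subseteq> ball G c r" using all walk_subgraph[OF _ sg] by (auto simp: ball_def)
  moreover have "finite (ball G c r)"
  proof -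
    have "ball G c r \<subseteq> verts G"
      using walk_verts[of G c] fg by (auto simp: ball_def finite_graph_def)
    then show ?thesis using fg finite_subset by (auto simp: finite_graph_def)
  qed
  ultimately have "card (verts H) \<le> card (ball G c r)" by (rule card_mono[rotated])
  then show "card (verts H) \<le> B" using assms(2) cG by fastforce
qed

definition gmap :: "('a \<Rightarrow> 'b) \<Rightarrow> 'a graph \<Rightarrow> 'b graph" where
  "gmap h G = (h ` verts G, (\<lambda>e. h ` e) ` edges G)"

lemma verts_gmap[simp]: "verts (gmap h G) = h ` verts G"
  and edges_gmap[simp]: "edges (gmap h G) = (\<lambda>e. h ` e) ` edges G"
  by (auto simp: gmap_def verts_def edges_def)

lemma finite_graph_gmap:
  assumes "inj h" "finite_graph G" shows "finite_graph (gmap h G)"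
proof -
  have "card (h ` e) = card e" for e using assms(1) by (simp add: card_image inj_on_subset)
  then show ?thesis using assms(2) by (auto simp: finite_graph_def)
qed

lemma walk_gmap:
  "walk_within H x y n \<Longrightarrow> walk_within (gmap g H) (g x) (g y) n"
proof (induction rule: walk_within.induct)
  case (here x n)
  then show ?case by (intro walk_within.here) simp
next
  case (step x z y n)
  have "g ` {x, z} \<in> (\<lambda>e. g ` e) ` edges H" using step(1) by (rule imageI)
  then have "{g x, g z} \<in> edges (gmap g H)" by simp
  then show ?case using step(3) by (rule walk_within.step)
qed

lemma growth_gmap:
  assumes inj: "inj h" and fg: "finite_graph G"
  shows "growth (gmap h G) r \<le> growth G r"
proof (rule growth_le[OF finite_graph_gmap[OF inj fg]])
  fix H assume sg: "subgraph H (gmap h G)" and rad: "radius_le H r"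
  define H' where "H' = gmap (inv h) H"
  have ih: "inv h (h x) = x" for x using inj by simp
  have ihs: "inv h ` h ` X = X" for X using ih by (simp add: image_image)
  have "subgraph H' G"
  proof -
    have "verts H' \<subseteq> verts G" using sg ihs unfolding H'_def subgraph_def
      by (metis image_mono verts_gmap)
    moreover have "edges H' \<subseteq> edges G"
    proof
      fix e assume "e \<in> edges H'"
      then obtain e0 where "e0 \<in> edges H" "e = inv h ` e0" by (auto simp: H'_def)
      then obtain e1 where "e1 \<in> edges G" "e0 = h ` e1" using sg by (auto simp: subgraph_def)
      then show "e \<in> edges G" using \<open>e = inv h ` e0\<close> ihs by simp
    qed
    moreover have "\<forall>e\<in>edges H'. e \<subseteq> verts H'" using sg unfolding H'_def subgraph_def
      by (simp add: image_mono)
    ultimately show ?thesis by (simp add: subgraph_def)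
  qed
  moreover have "radius_le H' r"
  proof -
    obtain c where c: "c \<in> verts H" "\<forall>v\<in>verts H. walk_within H c v r"
      using rad by (auto simp: radius_le_def)
    then show ?thesis unfolding radius_le_def H'_def using walk_gmap by fastforce
  qed
  moreover have "card (verts H') = card (verts H)"
  proof -
    have "verts H \<subseteq> range h" using sg by (auto simp: subgraph_def)
    then have "inj_on (inv h) (verts H)" by (rule inj_on_inv_into)
    then show ?thesis by (simp add: H'_def card_image)
  qed
  ultimately show "card (verts H) \<le> growth G r" using growth_ge[OF fg] by metis
qed

lemma contract_gmap:
  assumes inj: "inj h"
  shows "gmap h (contract H u v) = contract (gmap h H) (h u) (h v)"
proof -
  define g where "g = (\<lambda>x. if x = v then u else x)"
  define g' where "g' = (\<lambda>x. if x = h v then h u else x)"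
  have comm: "h ` (g ` e) = g' ` (h ` e)" for e
  proof -
    have "h (g x) = g' (h x)" for x using inj by (auto simp: g_def g'_def inj_eq)
    then show ?thesis by (simp add: image_image)
  qed
  have cd: "card (h ` X) = card X" for X using inj by (simp add: card_image inj_on_subset)
  have V: "h ` (verts H - {v}) = h ` verts H - {h v}"
    using inj by (simp add: image_set_diff)
  have E: "(\<lambda>e. h ` e) ` {e'. \<exists>e\<in>edges H. e' = g ` e \<and> card e' = 2}
      = {e'. \<exists>e\<in>(\<lambda>e. h ` e) ` edges H. e' = g' ` e \<and> card e' = 2}"
  proof (intro set_eqI iffI)
    fix x assume "x \<in> (\<lambda>e. h ` e) ` {e'. \<exists>e\<in>edges H. e' = g ` e \<and> card e' = 2}"
    then obtain e where "e \<in> edges H" "card (g ` e) = 2" "x = h ` (g ` e)" by auto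
    then show "x \<in> {e'. \<exists>e\<in>(\<lambda>e. h ` e) ` edges H. e' = g' ` e \<and> card e' = 2}"
    proof -
      have "card (g' ` h ` e) = 2" using comm cd \<open>card (g ` e) = 2\<close> by metis
      then show ?thesis using \<open>e \<in> edges H\<close> \<open>x = h ` (g ` e)\<close> comm by auto
    qed
  next
    fix x assume "x \<in> {e'. \<exists>e\<in>(\<lambda>e. h ` e) ` edges H. e' = g' ` e \<and> card e' = 2}"
    then obtain e where "e \<in> edges H" "card (g' ` (h ` e)) = 2" "x = g' ` (h ` e)" by auto
    then have "card (g ` e) = 2" "x = h ` (g ` e)" using comm cd by metis+
    then show "x \<in> (\<lambda>e. h ` e) ` {e'. \<exists>e\<in>edges H. e' = g ` e \<and> card e' = 2}"
      using \<open>e \<in> edges H\<close> by auto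
  qed
  show ?thesis unfolding contract_def gmap_def verts_def edges_def
    using V E by (simp add: g_def g'_def verts_def edges_def)
qed

lemma contracts_to_gmap:
  assumes inj: "inj h"
  shows "contracts_to S K \<Longrightarrow> contracts_to (gmap h S) (gmap h K)"
proof (induction rule: contracts_to.induct)
  case (refl G)
  then show ?case by (rule contracts_to.refl)
next
  case (step G H u v)
  have "h ` {u, v} \<in> (\<lambda>e. h ` e) ` edges H" using step(2) by (rule imageI)
  then have "{h u, h v} \<in> edges (gmap h H)" by simp
  moreover have "h u \<noteq> h v" using step(3) inj by (simp add: inj_eq)
  ultimately have "contracts_to (gmap h G) (contract (gmap h H) (h u) (h v))"
    using step(4) by (rule contracts_to.step[rotated])
  then show ?case by (simp add: contract_gmap[OF inj])
qed

lemma minor_gmap: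
  assumes inj: "inj h" and m: "minor G G'"
  shows "minor G (gmap h G')"
proof -
  obtain S K where S: "subgraph S G'" "contracts_to S K" "graph_iso G K"
    using m by (auto simp: minor_def)
  have "subgraph (gmap h S) (gmap h G')" using S(1) unfolding subgraph_def
    by (simp add: image_mono)
  moreover have "contracts_to (gmap h S) (gmap h K)" by (rule contracts_to_gmap[OF inj S(2)])
  moreover have "graph_iso G (gmap h K)"
  proof -
    obtain \<phi> where phi: "bij_betw \<phi> (verts G) (verts K)"
      "\<forall>x\<in>verts G. \<forall>y\<in>verts G. {x, y} \<in> edges G \<longleftrightarrow> {\<phi> x, \<phi> y} \<in> edges K"
      using S(3) by (auto simp: graph_iso_def)
    have b: "bij_betw (h \<circ> \<phi>) (verts G) (h ` verts K)"
      using phi(1) inj by (meson bij_betw_comp_iff bij_betw_imageI inj_on_subset subset_UNIV)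
    have ii: "inj (\<lambda>e. h ` e)" using inj by (simp add: inj_on_image)
    have "{h a, h b} \<in> (\<lambda>e. h ` e) ` edges K \<longleftrightarrow> {a, b} \<in> edges K" for a b
    proof -
      have "{h a, h b} = h ` {a, b}" by simp
      then show ?thesis using inj_image_mem_iff[OF ii, of "{a, b}" "edges K"] by simp
    qed
    then show ?thesis using b phi(2) unfolding graph_iso_def by (intro exI[of _ "h \<circ> \<phi>"]) auto
  qed
  ultimately show ?thesis unfolding minor_def by blast
qed

definition quot :: "('v \<Rightarrow> 'v) \<Rightarrow> 'v graph \<Rightarrow> 'v graph" where
  "quot \<rho> G = (\<rho> ` verts G, {\<rho> ` e | e. e \<in> edges G \<and> card (\<rho> ` e) = 2})"

lemma verts_quot[simp]: "verts (quot \<rho> G) = \<rho> ` verts G"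
  and edges_quot[simp]: "edges (quot \<rho> G) = {\<rho> ` e | e. e \<in> edges G \<and> card (\<rho> ` e) = 2}"
  by (auto simp: quot_def verts_def edges_def)

lemma quot_id:
  assumes "finite_graph G" shows "quot (\<lambda>x. x) G = G"
proof -
  have "{e | e. e \<in> edges G \<and> card e = 2} = edges G"
    using assms unfolding finite_graph_def by blast
  then show ?thesis unfolding quot_def verts_def edges_def by simp
qed

lemma quot_cong:
  assumes "\<forall>x\<in>verts G. \<rho> x = \<sigma> x" "\<forall>e\<in>edges G. e \<subseteq> verts G"
  shows "quot \<rho> G = quot \<sigma> G"
proof -
  have im: "\<rho> ` e = \<sigma> ` e" if "e \<subseteq> verts G" for e using assms(1) that
    by (intro image_cong) auto
  have "\<rho> ` verts G = \<sigma> ` verts G" by (rule im) simp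
  moreover have "{\<rho> ` e | e. e \<in> edges G \<and> card (\<rho> ` e) = 2} = {\<sigma> ` e | e. e \<in> edges G \<and> card (\<sigma> ` e) = 2}"
  proof -
    have eq: "\<forall>e\<in>edges G. \<rho> ` e = \<sigma> ` e" using im assms(2) by blast
    show ?thesis
    proof (intro set_eqI iffI)
      fix x assume "x \<in> {\<rho> ` e | e. e \<in> edges G \<and> card (\<rho> ` e) = 2}"
      then obtain e where e: "e \<in> edges G" "x = \<rho> ` e" "card (\<rho> ` e) = 2" by blast
      then have "x = \<sigma> ` e" "card (\<sigma> ` e) = 2" using eq by simp_all
      then show "x \<in> {\<sigma> ` e | e. e \<in> edges G \<and> card (\<sigma> ` e) = 2}" using e(1) by blast
    next
      fix x assume "x \<in> {\<sigma> ` e | e. e \<in> edges G \<and> card (\<sigma> ` e) = 2}"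
      then obtain e where e: "e \<in> edges G" "x = \<sigma> ` e" "card (\<sigma> ` e) = 2" by blast
      then have "x = \<rho> ` e" "card (\<rho> ` e) = 2" using eq by simp_all
      then show "x \<in> {\<rho> ` e | e. e \<in> edges G \<and> card (\<rho> ` e) = 2}" using e(1) by blast
    qed
  qed
  ultimately show ?thesis by (simp add: quot_def)
qed

lemma contract_quot:
  assumes fg: "finite_graph G" and u: "u \<in> \<rho> ` verts G" and uv: "u \<noteq> v"
  shows "contract (quot \<rho> G) u v = quot ((\<lambda>x. if x = v then u else x) \<circ> \<rho>) G"
proof -
  define g where "g = (\<lambda>x. if x = v then u else x)"
  have V: "\<rho> ` verts G - {v} = g ` (\<rho> ` verts G)"
    using u uv by (auto simp: g_def)
  have E: "{e'. \<exists>e\<in>{\<rho> ` e | e. e \<in> edges G \<and> card (\<rho> ` e) = 2}. e' = g ` e \<and> card e' = 2}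
     = {(g \<circ> \<rho>) ` e | e. e \<in> edges G \<and> card ((g \<circ> \<rho>) ` e) = 2}"
  proof (intro set_eqI iffI)
    fix x assume "x \<in> {e'. \<exists>e\<in>{\<rho> ` e | e. e \<in> edges G \<and> card (\<rho> ` e) = 2}. e' = g ` e \<and> card e' = 2}"
    then obtain e where "e \<in> edges G" "x = g ` \<rho> ` e" "card x = 2" by auto
    then show "x \<in> {(g \<circ> \<rho>) ` e | e. e \<in> edges G \<and> card ((g \<circ> \<rho>) ` e) = 2}"
      by (auto simp: image_comp)
  next
    fix x assume "x \<in> {(g \<circ> \<rho>) ` e | e. e \<in> edges G \<and> card ((g \<circ> \<rho>) ` e) = 2}"
    then obtain e where e: "e \<in> edges G" "x = g ` \<rho> ` e" "card x = 2" by (auto simp: image_comp)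
    have ce: "card e = 2" using e(1) fg by (auto simp: finite_graph_def)
    then have fe: "finite e" by (metis card.infinite zero_neq_numeral)
    have "card (\<rho> ` e) \<le> 2" using card_image_le[OF fe, of \<rho>] ce by simp
    moreover have "card (g ` \<rho> ` e) \<le> card (\<rho> ` e)" using fe by (simp add: card_image_le)
    ultimately have "card (\<rho> ` e) = 2" using e(2,3) by simp
    then show "x \<in> {e'. \<exists>e\<in>{\<rho> ` e | e. e \<in> edges G \<and> card (\<rho> ` e) = 2}. e' = g ` e \<and> card e' = 2}"
      using e by auto
  qed
  have 1: "contract (quot \<rho> G) u v = (\<rho> ` verts G - {v},
      {e'. \<exists>e\<in>{\<rho> ` e | e. e \<in> edges G \<and> card (\<rho> ` e) = 2}. e' = g ` e \<and> card e' = 2})"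
    unfolding contract_def g_def by (simp only: verts_quot edges_quot)
  have 2: "quot (g \<circ> \<rho>) G = (g ` (\<rho> ` verts G), {(g \<circ> \<rho>) ` e | e. e \<in> edges G \<and> card ((g \<circ> \<rho>) ` e) = 2})"
    unfolding quot_def by (simp only: image_comp)
  show ?thesis unfolding g_def[symmetric] 1 2 V E by simp
qed

lemma contracts_quot:
  fixes G :: "'v graph" and lev :: "'v \<Rightarrow> nat"
  assumes fg: "finite_graph G"
    and Rsub: "R \<subseteq> verts G"
    and phiR: "\<forall>x\<in>verts G. \<phi> x \<in> R" and phiid: "\<forall>r\<in>R. \<phi> r = r"
    and wit: "\<forall>v\<in>verts G - R. \<exists>w. {w, v} \<in> edges G \<and> \<phi> w = \<phi> v \<and> (w \<in> R \<or> lev w < lev v)"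
  shows "contracts_to G (quot \<phi> G)"
proof -
  have E: "\<forall>e\<in>edges G. e \<subseteq> verts G" using fg by (auto simp: finite_graph_def)
  have finV: "finite (verts G)" using fg by (auto simp: finite_graph_def)
  define \<rho> where "\<rho> Y x = (if x \<in> Y then \<phi> x else x)" for Y x
  have main: "\<forall>Y. card Y = N \<longrightarrow> Y \<subseteq> verts G - R \<longrightarrow>
      (\<forall>v\<in>Y. \<exists>w. {w, v} \<in> edges G \<and> \<phi> w = \<phi> v \<and> (w \<in> R \<or> (w \<in> Y \<and> lev w < lev v)))
      \<longrightarrow> contracts_to G (quot (\<rho> Y) G)" for N
  proof (induction N)
    case 0
    show ?case
    proof (intro allI impI)
      fix Y :: "'v set" assume "card Y = 0" "Y \<subseteq> verts G - R"
      then have "Y = {}" using finV finite_subset by fastforce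
      then have "\<rho> Y = (\<lambda>x. x)" by (simp add: \<rho>_def fun_eq_iff)
      then show "contracts_to G (quot (\<rho> Y) G)" using quot_id[OF fg] contracts_to.refl by simp
    qed
  next
    case (Suc N)
    show ?case
    proof (intro allI impI)
      fix Y :: "'v set"
      assume cY: "card Y = Suc N" and YR: "Y \<subseteq> verts G - R"
        and wY: "\<forall>v\<in>Y. \<exists>w. {w, v} \<in> edges G \<and> \<phi> w = \<phi> v \<and> (w \<in> R \<or> (w \<in> Y \<and> lev w < lev v))"
      have finY: "finite Y" using YR finV finite_subset by blast
      have "Y \<noteq> {}" using cY by auto
      then obtain v where vY: "v \<in> Y" and vmax: "lev v = Max (lev ` Y)"
        using finY by (metis (mono_tags, lifting) Max_in finite_imageI image_iff image_is_empty)
      have vm: "\<forall>y\<in>Y. lev y \<le> lev v" using vmax finY by simp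
      define Y' where "Y' = Y - {v}"
      have cY': "card Y' = N" using cY vY finY by (simp add: Y'_def)
      have Y'R: "Y' \<subseteq> verts G - R" using YR by (auto simp: Y'_def)
      have wY': "\<forall>y\<in>Y'. \<exists>w. {w, y} \<in> edges G \<and> \<phi> w = \<phi> y \<and> (w \<in> R \<or> (w \<in> Y' \<and> lev w < lev y))"
      proof
        fix y assume y: "y \<in> Y'"
        then have "y \<in> Y" by (simp add: Y'_def)
        then obtain w where w: "{w, y} \<in> edges G" "\<phi> w = \<phi> y" "w \<in> R \<or> (w \<in> Y \<and> lev w < lev y)"
          using wY by blast
        have "w \<in> R \<or> (w \<in> Y' \<and> lev w < lev y)"
          using w(3) vm \<open>y \<in> Y\<close> by (auto simp: Y'_def)
        then show "\<exists>w. {w, y} \<in> edges G \<and> \<phi> w = \<phi> y \<and> (w \<in> R \<or> (w \<in> Y' \<and> lev w < lev y))"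
          using w by blast
      qed
      have IH: "contracts_to G (quot (\<rho> Y') G)" using Suc.IH cY' Y'R wY' by blast
      obtain w where w: "{w, v} \<in> edges G" "\<phi> w = \<phi> v" "w \<in> R \<or> (w \<in> Y \<and> lev w < lev v)"
        using wY vY by blast
      define u where "u = \<phi> v"
      have vV: "v \<in> verts G" "v \<notin> R" using vY YR by auto
      have uR: "u \<in> R" using phiR vV by (simp add: u_def)
      have uv: "u \<noteq> v" using uR vV by auto
      have uY': "u \<notin> Y'" using uR Y'R by auto
      have u_in: "u \<in> \<rho> Y' ` verts G"
      proof -
        have "\<rho> Y' u = u" using uY' by (simp add: \<rho>_def)
        moreover have "u \<in> verts G" using uR Rsub by auto
        ultimately show ?thesis by (metis image_eqI)
      qed
      have rw: "\<rho> Y' w = u"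
      proof (cases "w \<in> R")
        case True
        then have "w \<notin> Y'" using Y'R by auto
        then show ?thesis using True phiid w(2) by (simp add: \<rho>_def u_def)
      next
        case False
        then have "w \<in> Y'" using w(3) by (auto simp: Y'_def)
        then show ?thesis using w(2) by (simp add: \<rho>_def u_def)
      qed
      have rv: "\<rho> Y' v = v" by (simp add: \<rho>_def Y'_def)
      have edge: "{u, v} \<in> edges (quot (\<rho> Y') G)"
      proof -
        have "\<rho> Y' ` {w, v} = {u, v}" using rw rv by simp
        moreover have "card {u, v} = 2" using uv by simp
        ultimately show ?thesis using w(1) by (simp, metis)
      qed
      have eq: "contract (quot (\<rho> Y') G) u v = quot (\<rho> Y) G"
      proof -
        have "contract (quot (\<rho> Y') G) u v = quot ((\<lambda>x. if x = v then u else x) \<circ> \<rho> Y') G"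
          by (rule contract_quot[OF fg u_in uv])
        also have "\<dots> = quot (\<rho> Y) G"
        proof (rule quot_cong[OF _ E], intro ballI)
          fix x assume xV: "x \<in> verts G"
          show "((\<lambda>x. if x = v then u else x) \<circ> \<rho> Y') x = \<rho> Y x"
          proof (cases "x = v")
            case True
            then show ?thesis using rv vY by (simp add: \<rho>_def u_def)
          next
            case False
            show ?thesis
            proof (cases "x \<in> Y'")
              case True
              then have "\<phi> x \<in> R" using phiR xV by simp
              then have "\<phi> x \<noteq> v" using vV by auto
              then show ?thesis using True False by (simp add: \<rho>_def Y'_def)
            next
              case False2: False
              then show ?thesis using False by (simp add: \<rho>_def Y'_def)
            qed
          qed
        qed
        finally show ?thesis .
      qed
      show "contracts_to G (quot (\<rho> Y) G)"
        using contracts_to.step[OF IH edge uv] eq by simp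
    qed
  qed
  define Y where "Y = verts G - R"
  have "\<forall>v\<in>Y. \<exists>w. {w, v} \<in> edges G \<and> \<phi> w = \<phi> v \<and> (w \<in> R \<or> (w \<in> Y \<and> lev w < lev v))"
  proof
    fix v assume "v \<in> Y"
    then obtain w where w: "{w, v} \<in> edges G" "\<phi> w = \<phi> v" "w \<in> R \<or> lev w < lev v"
      using wit by (auto simp: Y_def)
    have "w \<in> verts G" using w(1) E by auto
    then show "\<exists>w. {w, v} \<in> edges G \<and> \<phi> w = \<phi> v \<and> (w \<in> R \<or> (w \<in> Y \<and> lev w < lev v))"
      using w by (auto simp: Y_def)
  qed
  then have "contracts_to G (quot (\<rho> Y) G)" using main[of "card Y"] by (simp add: Y_def)
  moreover have "quot (\<rho> Y) G = quot \<phi> G"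
    using phiid by (intro quot_cong[OF _ E]) (auto simp: \<rho>_def Y_def)
  ultimately show ?thesis by simp
qed

definition pt :: "('k \<Rightarrow> 'b) \<Rightarrow> ('k \<Rightarrow> 'b) \<Rightarrow> nat \<Rightarrow> 'k \<Rightarrow> nat \<Rightarrow> 'b + 'k \<times> nat" where
  "pt s t L k p = (if p = 0 then Inl (s k) else if p = L then Inl (t k) else Inr (k, p))"

definition subdiv :: "'b set \<Rightarrow> 'k set \<Rightarrow> ('k \<Rightarrow> 'b) \<Rightarrow> ('k \<Rightarrow> 'b) \<Rightarrow> nat \<Rightarrow> ('b + 'k \<times> nat) graph" where
  "subdiv B K s t L = (Inl ` B \<union> Inr ` (K \<times> {0<..<L}),
     {{pt s t L k p, pt s t L k (Suc p)} | k p. k \<in> K \<and> p < L})"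

lemma verts_subdiv: "verts (subdiv B K s t L) = Inl ` B \<union> Inr ` (K \<times> {0<..<L})"
  and edges_subdiv: "edges (subdiv B K s t L) = {{pt s t L k p, pt s t L k (Suc p)} | k p. k \<in> K \<and> p < L}"
  by (simp_all add: subdiv_def verts_def edges_def)

lemma pt_Inr: "pt s t L k' q = Inr (k, p) \<longleftrightarrow> q \<noteq> 0 \<and> q \<noteq> L \<and> k' = k \<and> q = p"
  by (auto simp: pt_def)

lemma pt_Inl: "pt s t L k q = Inl b \<longleftrightarrow> (q = 0 \<and> s k = b) \<or> (q \<noteq> 0 \<and> q = L \<and> t k = b)"
  by (auto simp: pt_def)

lemma pt_in:
  assumes "k \<in> K" "p \<le> L" "s k \<in> B" "t k \<in> B"
  shows "pt s t L k p \<in> verts (subdiv B K s t L)"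
  using assms by (auto simp: pt_def verts_subdiv)

lemma pt_neq: "2 \<le> L \<Longrightarrow> pt s t L k p \<noteq> pt s t L k (Suc p)"
  by (auto simp: pt_def)

locale sd =
  fixes B :: "'b set" and K :: "'k set" and s t :: "'k \<Rightarrow> 'b" and L :: nat
  assumes L2: "2 \<le> L" and finB: "finite B" and finK: "finite K"
    and stB: "\<forall>k\<in>K. s k \<in> B \<and> t k \<in> B"
begin

abbreviation "G0 \<equiv> subdiv B K s t L"
abbreviation "P \<equiv> pt s t L"

lemma fg: "finite_graph G0"
proof -
  have "finite (verts G0)" using finB finK by (simp add: verts_subdiv)
  moreover have "e \<subseteq> verts G0 \<and> card e = 2" if he: "e \<in> edges G0" for e
  proof -
    obtain k p where e: "e = {P k p, P k (Suc p)}" "k \<in> K" "p < L"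
      using he by (auto simp: edges_subdiv)
    have "P k p \<in> verts G0" "P k (Suc p) \<in> verts G0" using e stB by (auto intro!: pt_in)
    moreover have "P k p \<noteq> P k (Suc p)" using L2 by (rule pt_neq)
    ultimately show ?thesis using e by auto
  qed
  ultimately show ?thesis by (auto simp: finite_graph_def)
qed

lemma card_verts: "card (verts G0) \<le> card B + card K * L"
proof -
  have "card (verts G0) \<le> card (Inl ` B :: ('b + 'k \<times> nat) set) + card (Inr ` (K \<times> {0<..<L}) :: ('b + 'k \<times> nat) set)"
    by (simp add: verts_subdiv card_Un_le)
  also have "\<dots> \<le> card B + card (K \<times> {0<..<L})"
    by (intro add_mono card_image_le) (use finB finK in auto)
  also have "card (K \<times> {0<..<L}) \<le> card K * L" by (simp add: card_cartesian_product)
  finally show ?thesis by simp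
qed

lemma edge_cases:
  assumes "{x, w} \<in> edges G0"
  obtains k q where "k \<in> K" "q < L" "x = P k q" "w = P k (Suc q)"
    | k q where "k \<in> K" "q < L" "x = P k (Suc q)" "w = P k q"
  using assms by (auto simp: edges_subdiv doubleton_eq_iff)

lemma nbrs_Inr:
  "nbrs G0 (Inr (k, p)) \<subseteq> {P k (p - 1), P k (Suc p)}"
proof
  fix w assume "w \<in> nbrs G0 (Inr (k, p))"
  then have "{Inr (k, p), w} \<in> edges G0" by (simp add: nbrs_def)
  then show "w \<in> {P k (p - 1), P k (Suc p)}"
  proof (cases rule: edge_cases)
    case (1 k' q)
    then have "P k' q = Inr (k, p)" by simp
    then have "k' = k" "q = p" by (simp_all add: pt_Inr)
    then show ?thesis using 1 by simp
  next
    case (2 k' q)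
    then have "P k' (Suc q) = Inr (k, p)" by simp
    then have "k' = k" "Suc q = p" by (simp_all add: pt_Inr)
    then have "q = p - 1" by simp
    then show ?thesis using 2 \<open>k' = k\<close> by simp
  qed
qed

lemma nbrs_Inl:
  "nbrs G0 (Inl b) \<subseteq> (\<lambda>k. P k 1) ` {k\<in>K. s k = b} \<union> (\<lambda>k. P k (L - 1)) ` {k\<in>K. t k = b}"
proof
  fix w assume "w \<in> nbrs G0 (Inl b)"
  then have "{Inl b, w} \<in> edges G0" by (simp add: nbrs_def)
  then show "w \<in> (\<lambda>k. P k 1) ` {k\<in>K. s k = b} \<union> (\<lambda>k. P k (L - 1)) ` {k\<in>K. t k = b}"
  proof (cases rule: edge_cases)
    case (1 k q)
    then have "q = 0" "s k = b" using pt_Inl[of s t L k q b] by auto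
    then show ?thesis using 1 by auto
  next
    case (2 k q)
    then have "Suc q = L" "t k = b" using pt_Inl[of s t L k "Suc q" b] by auto
    then show ?thesis using 2 by force
  qed
qed

definition dl :: "'b \<Rightarrow> 'b + 'k \<times> nat \<Rightarrow> nat" where
  "dl b x = (case x of Inl b' \<Rightarrow> if b' = b then 0 else L
     | Inr (k, p) \<Rightarrow> min (if s k = b then p else L) (if t k = b then L - p else L))"

lemma dl_pt: "q \<le> L \<Longrightarrow> dl b (P k q) = min (if s k = b then q else L) (if t k = b then L - q else L)"
  by (auto simp: dl_def pt_def)

lemma dl_walk: "walk_within G0 x y n \<Longrightarrow> y = Inl b \<Longrightarrow> dl b x \<le> n"
proof (induction rule: walk_within.induct)
  case (here x n)
  then show ?case by (simp add: dl_def)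
next
  case (step x z y n)
  have dz: "dl b z \<le> n" using step by simp
  from step(1) show ?case
  proof (cases rule: edge_cases)
    case (1 k q)
    then show ?thesis using dz dl_pt[of q b k] dl_pt[of "Suc q" b k] by (auto split: if_splits)
  next
    case (2 k q)
    then show ?thesis using dz dl_pt[of q b k] dl_pt[of "Suc q" b k] by (auto split: if_splits)
  qed
qed

lemma sep: "b1 \<noteq> b2 \<Longrightarrow> walk_within G0 (Inl b1) (Inl b2) n \<Longrightarrow> L \<le> n"
  using dl_walk[of "Inl b1" "Inl b2" n b2] by (simp add: dl_def)

lemma ball:
  assumes deg: "\<forall>b\<in>B. card {k\<in>K. s k = b} + card {k\<in>K. t k = b} \<le> 3"
    and c: "c \<in> verts G0" and r: "2 * r \<le> L"
  shows "card (ball G0 c r) \<le> 1 + 3 * r"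
proof (rule ball_bound[OF fg _ _ _ c r, of "Inl ` B"])
  have d2: "card (nbrs G0 (Inr (k, p))) \<le> 2" for k p
    by (rule order_trans[OF card_mono[OF _ nbrs_Inr]]) (auto simp: card_insert_le_m1 card_le_Suc_iff)
  have d3: "card (nbrs G0 (Inl b)) \<le> 3" if "b \<in> B" for b
  proof -
    have "card (nbrs G0 (Inl b)) \<le> card ((\<lambda>k. P k 1) ` {k\<in>K. s k = b} \<union> (\<lambda>k. P k (L - 1)) ` {k\<in>K. t k = b})"
      by (rule card_mono[OF _ nbrs_Inl]) (use finK in auto)
    also have "\<dots> \<le> card {k\<in>K. s k = b} + card {k\<in>K. t k = b}"
      by (rule order_trans[OF card_Un_le add_mono[OF card_image_le card_image_le]]) (use finK in auto)
    finally show ?thesis using deg that by auto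
  qed
  show "\<forall>v\<in>verts G0. card (nbrs G0 v) \<le> 3"
  proof
    fix v assume "v \<in> verts G0"
    then show "card (nbrs G0 v) \<le> 3"
    proof (cases v)
      case (Inl b) then show ?thesis using d3 \<open>v \<in> verts G0\<close> by (auto simp: verts_subdiv)
    next
      case (Inr kp) then show ?thesis using d2[of "fst kp" "snd kp"] by simp
    qed
  qed
  show "\<forall>v\<in>verts G0 - Inl ` B. card (nbrs G0 v) \<le> 2"
  proof
    fix v assume "v \<in> verts G0 - Inl ` B"
    then obtain kp where "v = Inr kp" by (auto simp: verts_subdiv)
    then show "card (nbrs G0 v) \<le> 2" using d2[of "fst kp" "snd kp"] by simp
  qed
  show "\<forall>b1\<in>Inl ` B. \<forall>b2\<in>Inl ` B. \<forall>n. b1 \<noteq> b2 \<longrightarrow> walk_within G0 b1 b2 n \<longrightarrow> L \<le> n"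
    using sep by blast
qed

end

lemma edge_in_sd:
  "k \<in> K \<Longrightarrow> p < L \<Longrightarrow> {pt s t L k p, pt s t L k (Suc p)} \<in> edges (subdiv B K s t L)"
  by (auto simp: edges_subdiv)

type_synonym vt = "((nat \<times> nat) + ((nat \<times> nat) + nat) \<times> nat) set"

theorem main_construction:
  fixes G :: "'a graph"
  assumes fg: "finite_graph G"
  shows "\<exists>(Bs :: (nat \<times> nat) set) (Ks :: ((nat \<times> nat) + nat) set) s t. finite Bs \<and> finite Ks \<and>
     (\<forall>L\<ge>2. sd Bs Ks s t L \<and> minor G (subdiv Bs Ks s t L)) \<and>
     (\<forall>b\<in>Bs. card {k\<in>Ks. s k = b} + card {k\<in>Ks. t k = b} \<le> 3)"
proof -
  define V where "V = verts G"
  define E where "E = edges G"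
  have finV: "finite V" using fg by (simp add: finite_graph_def V_def)
  have Esub: "\<forall>e\<in>E. e \<subseteq> V \<and> card e = 2" using fg by (simp add: finite_graph_def V_def E_def)
  have finE: "finite E"
  proof -
    have "E \<subseteq> Pow V" using Esub by auto
    then show ?thesis using finV finite_subset by blast
  qed
  define n where "n = card V"
  define m where "m = card E"
  obtain vv where vv: "bij_betw vv {0..<n} V" using ex_bij_betw_nat_finite[OF finV] n_def by blast
  obtain ee where ee: "bij_betw ee {0..<m} E" using ex_bij_betw_nat_finite[OF finE] m_def by blast
  have "\<forall>j\<in>{..<m}. \<exists>ab. fst ab < n \<and> snd ab < n \<and> fst ab \<noteq> snd ab \<and> ee j = {vv (fst ab), vv (snd ab)}"
  proof
    fix j assume "j \<in> {..<m}"
    then have "ee j \<in> E" using ee by (auto simp: bij_betw_def)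
    then have "ee j \<subseteq> V" "card (ee j) = 2" using Esub by auto
    then obtain x y where xy: "x \<noteq> y" "ee j = {x, y}" by (auto simp: card_2_iff)
    then have "x \<in> V" "y \<in> V" using \<open>ee j \<subseteq> V\<close> by auto
    then obtain i1 i2 where "i1 < n" "i2 < n" "vv i1 = x" "vv i2 = y"
      using vv by (auto simp: bij_betw_def image_iff)
    then show "\<exists>ab. fst ab < n \<and> snd ab < n \<and> fst ab \<noteq> snd ab \<and> ee j = {vv (fst ab), vv (snd ab)}"
      using xy by (intro exI[of _ "(i1, i2)"]) auto
  qed
  then obtain ab where ab: "\<forall>j\<in>{..<m}. fst (ab j) < n \<and> snd (ab j) < n \<and> fst (ab j) \<noteq> snd (ab j) \<and>
      ee j = {vv (fst (ab j)), vv (snd (ab j))}"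
    by (metis (no_types, lifting) bchoice)
  define a where "a j = fst (ab j)" for j
  define b where "b j = snd (ab j)" for j
  have abj: "a j < n" "b j < n" "a j \<noteq> b j" "ee j = {vv (a j), vv (b j)}" if "j < m" for j
    using ab that by (auto simp: a_def b_def)
  define Bs :: "(nat \<times> nat) set" where "Bs = {..<n} \<times> {..m}"
  define Ks :: "((nat \<times> nat) + nat) set" where "Ks = Inl ` ({..<n} \<times> {..<m}) \<union> Inr ` {..<m}"
  define s :: "((nat \<times> nat) + nat) \<Rightarrow> nat \<times> nat" where
    "s k = (case k of Inl ij \<Rightarrow> ij | Inr j \<Rightarrow> (a j, j))" for k
  define t :: "((nat \<times> nat) + nat) \<Rightarrow> nat \<times> nat" where
    "t k = (case k of Inl ij \<Rightarrow> (fst ij, Suc (snd ij)) | Inr j \<Rightarrow> (b j, j))" for k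
  have finB: "finite Bs" by (simp add: Bs_def)
  have finK: "finite Ks" by (simp add: Ks_def)
  have stB: "\<forall>k\<in>Ks. s k \<in> Bs \<and> t k \<in> Bs"
    using abj by (auto simp: Ks_def Bs_def s_def t_def)
  have deg: "\<forall>x\<in>Bs. card {k\<in>Ks. s k = x} + card {k\<in>Ks. t k = x} \<le> 3"
  proof
    fix x assume "x \<in> Bs"
    obtain i j where x: "x = (i, j)" by fastforce
    have c2: "card {p, q} \<le> 2" for p q :: "(nat \<times> nat) + nat" by (cases "p = q") auto
    show "card {k\<in>Ks. s k = x} + card {k\<in>Ks. t k = x} \<le> 3"
    proof (cases "j < m \<and> a j = i")
      case True
      then have "b j \<noteq> i" using abj(3)[of j] by auto
      have "{k\<in>Ks. s k = x} \<subseteq> {Inl (i, j), Inr j}" by (auto simp: Ks_def s_def x)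
      then have "card {k\<in>Ks. s k = x} \<le> card {Inl (i, j), Inr j}" by (intro card_mono) auto
      then have 1: "card {k\<in>Ks. s k = x} \<le> 2" using c2[of "Inl (i, j)" "Inr j"] by linarith
      have "{k\<in>Ks. t k = x} \<subseteq> {Inl (i, j - 1)}" using \<open>b j \<noteq> i\<close> by (auto simp: Ks_def t_def x)
      then have "card {k\<in>Ks. t k = x} \<le> card {Inl (i, j - 1) :: (nat \<times> nat) + nat}" by (intro card_mono) auto
      then have 2: "card {k\<in>Ks. t k = x} \<le> 1" by simp
      show ?thesis using 1 2 by simp
    next
      case False
      have "{k\<in>Ks. s k = x} \<subseteq> {Inl (i, j)}" using False by (auto simp: Ks_def s_def x)
      then have "card {k\<in>Ks. s k = x} \<le> card {Inl (i, j) :: (nat \<times> nat) + nat}" by (intro card_mono) auto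
      then have 1: "card {k\<in>Ks. s k = x} \<le> 1" by simp
      have "{k\<in>Ks. t k = x} \<subseteq> {Inl (i, j - 1), Inr j}" by (auto simp: Ks_def t_def x)
      then have "card {k\<in>Ks. t k = x} \<le> card {Inl (i, j - 1), Inr j}" by (intro card_mono) auto
      then have 2: "card {k\<in>Ks. t k = x} \<le> 2" using c2[of "Inl (i, j - 1)" "Inr j"] by linarith
      show ?thesis using 1 2 by simp
    qed
  qed
  have minor: "minor G (subdiv Bs Ks s t L)" if L2: "2 \<le> L" for L
  proof -
    interpret sd Bs Ks s t L using L2 finB finK stB by unfold_locales auto
    define R :: "((nat \<times> nat) + ((nat \<times> nat) + nat) \<times> nat) set" where "R = Inl ` ({..<n} \<times> {0})"
    define \<phi> :: "((nat \<times> nat) + ((nat \<times> nat) + nat) \<times> nat) \<Rightarrow> ((nat \<times> nat) + ((nat \<times> nat) + nat) \<times> nat)" where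
      "\<phi> x = (case x of Inl ij \<Rightarrow> Inl (fst ij, 0)
         | Inr kp \<Rightarrow> (case fst kp of Inl ij \<Rightarrow> Inl (fst ij, 0) | Inr j \<Rightarrow> Inl (a j, 0)))" for x
    define lev :: "((nat \<times> nat) + ((nat \<times> nat) + nat) \<times> nat) \<Rightarrow> nat" where
      "lev x = (case x of Inl ij \<Rightarrow> snd ij * L
         | Inr kp \<Rightarrow> (case fst kp of Inl ij \<Rightarrow> snd ij * L + snd kp | Inr j \<Rightarrow> m * L + snd kp))" for x
    have Vs: "verts G0 = Inl ` Bs \<union> Inr ` (Ks \<times> {0<..<L})" by (rule verts_subdiv)
    have Rsub: "R \<subseteq> verts G0" by (auto simp: R_def verts_subdiv Bs_def)
    have phiR: "\<forall>x\<in>verts G0. \<phi> x \<in> R"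
      using abj by (auto simp: verts_subdiv R_def \<phi>_def Bs_def Ks_def)
    have phiid: "\<forall>r\<in>R. \<phi> r = r" by (auto simp: R_def \<phi>_def)
    have Pk: "P k q = (if q = 0 then Inl (s k) else if q = L then Inl (t k) else Inr (k, q))" for k q
      by (simp add: pt_def)
    have wit: "\<forall>v\<in>verts G0 - R. \<exists>w. {w, v} \<in> edges G0 \<and> \<phi> w = \<phi> v \<and> (w \<in> R \<or> lev w < lev v)"
    proof
      fix v assume v: "v \<in> verts G0 - R"
      show "\<exists>w. {w, v} \<in> edges G0 \<and> \<phi> w = \<phi> v \<and> (w \<in> R \<or> lev w < lev v)"
      proof (cases v)
        case (Inl x)
        obtain i j where x: "x = (i, j)" by fastforce
        have ij: "i < n" "j \<le> m" "j \<noteq> 0" using v Inl x by (auto simp: verts_subdiv Bs_def R_def)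
        define k where "k = (Inl (i, j - 1) :: (nat \<times> nat) + nat)"
        have kK: "k \<in> Ks" using ij by (auto simp: k_def Ks_def)
        define w where "w = P k (L - 1)"
        have w: "w = Inr (k, L - 1)" using L2 by (simp add: w_def Pk)
        have "P k (Suc (L - 1)) = v" using L2 ij Inl x by (simp add: Pk k_def t_def)
        then have "{w, v} \<in> edges G0" using edge_in_sd[OF kK, of "L - 1" L s t Bs] L2 w_def by simp
        moreover have "\<phi> w = \<phi> v" by (simp add: w \<phi>_def k_def Inl x)
        moreover have "lev w < lev v"
        proof -
          obtain j' where "j = Suc j'" using ij(3) not0_implies_Suc by blast
          then have "(j - 1) * L + (L - 1) < j * L" using L2 by simp
          then show ?thesis by (simp add: w lev_def k_def Inl x)
        qed
        ultimately show ?thesis by blast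
      next
        case (Inr kp)
        obtain k p where kp: "kp = (k, p)" by fastforce
        have kK: "k \<in> Ks" and p: "0 < p" "p < L" using v Inr kp by (auto simp: verts_subdiv)
        have vP: "v = P k (Suc (p - 1))" using p Inr kp by (simp add: Pk)
        define w where "w = P k (p - 1)"
        have e: "{w, v} \<in> edges G0" using edge_in_sd[OF kK, of "p - 1" L s t Bs] p vP w_def by simp
        show ?thesis
        proof (cases "p = 1")
          case True
          then have w: "w = Inl (s k)" by (simp add: w_def Pk)
          have "\<phi> w = \<phi> v \<and> lev w < lev v"
          proof (cases k)
            case (Inl ij)
            then show ?thesis using kK True by (auto simp: w \<phi>_def lev_def s_def Inr kp)
          next
            case (Inr j)
            then have "j < m" using kK by (auto simp: Ks_def)
            then have jl: "j * L \<le> m * L" by simp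
            have "lev w = j * L" "lev v = m * L + 1" using Inr True
              by (simp_all add: w lev_def s_def \<open>v = Inr kp\<close> kp)
            moreover have "\<phi> w = \<phi> v" using Inr True by (simp add: w \<phi>_def s_def \<open>v = Inr kp\<close> kp)
            ultimately show ?thesis using jl by linarith
          qed
          then show ?thesis using e by blast
        next
          case False
          then have w: "w = Inr (k, p - 1)" using p by (simp add: w_def Pk)
          have "\<phi> w = \<phi> v \<and> lev w < lev v"
            using p False by (cases k) (auto simp: w \<phi>_def lev_def Inr kp)
          then show ?thesis using e by blast
        qed
      qed
    qed
    have ct: "contracts_to G0 (quot \<phi> G0)" by (rule contracts_quot[OF fg Rsub phiR phiid wit])
    have qV: "verts (quot \<phi> G0) = R"
    proof -
      have "\<phi> ` verts G0 \<subseteq> R" using phiR by auto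
      moreover have "R \<subseteq> \<phi> ` verts G0"
      proof
        fix r assume "r \<in> R"
        then have "\<phi> r = r" "r \<in> verts G0" using phiid Rsub by auto
        then show "r \<in> \<phi> ` verts G0" by (metis image_eqI)
      qed
      ultimately show ?thesis by simp
    qed
    have phiP: "\<phi> (P k q) = (case k of Inl ij \<Rightarrow> Inl (fst ij, 0) | Inr j \<Rightarrow> if q = L then Inl (b j, 0) else Inl (a j, 0))"
      if "q \<le> L" for k q
      using that L2 by (cases k) (auto simp: Pk \<phi>_def s_def t_def)
    have qE: "edges (quot \<phi> G0) = {{Inl (a j, 0), Inl (b j, 0)} | j. j < m}"
    proof (intro set_eqI iffI)
      fix x assume "x \<in> edges (quot \<phi> G0)"
      then obtain e where e: "e \<in> edges G0" "x = \<phi> ` e" "card (\<phi> ` e) = 2" by auto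
      then obtain k p where kp: "k \<in> Ks" "p < L" "e = {P k p, P k (Suc p)}" by (auto simp: edges_subdiv)
      show "x \<in> {{Inl (a j, 0), Inl (b j, 0)} | j. j < m}"
      proof (cases k)
        case (Inl ij)
        then have "\<phi> ` e = {Inl (fst ij, 0)}" using kp phiP[of p k] phiP[of "Suc p" k] by simp
        then show ?thesis using e by simp
      next
        case (Inr j)
        then have jm: "j < m" using kp by (auto simp: Ks_def)
        have "\<phi> ` e = {Inl (a j, 0), if Suc p = L then Inl (b j, 0) else Inl (a j, 0)}"
          using kp phiP[of p k] phiP[of "Suc p" k] Inr by simp
        then have "Suc p = L" "x = {Inl (a j, 0), Inl (b j, 0)}" using e by (auto split: if_splits)
        then show ?thesis using jm by blast
      qed
    next
      fix x :: vt assume "x \<in> {{Inl (a j, 0), Inl (b j, 0)} | j. j < m}"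
      then obtain j where j: "j < m" "x = {Inl (a j, 0), Inl (b j, 0)}" by blast
      define k where "k = (Inr j :: (nat \<times> nat) + nat)"
      have kK: "k \<in> Ks" using j by (simp add: k_def Ks_def)
      define e where "e = {P k (L - 1), P k (Suc (L - 1))}"
      have eE: "e \<in> edges G0" unfolding e_def by (rule edge_in_sd[OF kK]) (use L2 in simp)
      have L1: "L - 1 \<noteq> L" "Suc (L - 1) = L" using L2 by simp_all
      have "\<phi> ` e = x" using phiP[of "L - 1" k] phiP[of "Suc (L - 1)" k] L1 j by (simp add: e_def k_def)
      moreover have "card x = 2" using abj[OF j(1)] j by simp
      ultimately show "x \<in> edges (quot \<phi> G0)" using eE by auto
    qed
    define idx where "idx = inv_into {0..<n} vv"
    define \<psi> :: "'a \<Rightarrow> ((nat \<times> nat) + ((nat \<times> nat) + nat) \<times> nat)" where "\<psi> x = Inl (idx x, 0)" for x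
    have vvinj: "inj_on vv {0..<n}" and vvim: "vv ` {0..<n} = V" using vv by (auto simp: bij_betw_def)
    have idx_vv: "idx (vv i) = i" if "i < n" for i using vvinj that by (simp add: idx_def inv_into_f_f)
    have vv_idx: "vv (idx x) = x" if "x \<in> V" for x using vvim that by (auto simp: idx_def f_inv_into_f)
    have idx_lt: "idx x < n" if "x \<in> V" for x using vvim that inv_into_into[of x vv "{0..<n}"] by (simp add: idx_def)
    have iso: "graph_iso G (quot \<phi> G0)"
      unfolding graph_iso_def
    proof (intro exI[of _ \<psi>] conjI ballI)
      show "bij_betw \<psi> (verts G) (verts (quot \<phi> G0))"
      proof (rule bij_betw_imageI)
        show "inj_on \<psi> (verts G)"
        proof (rule inj_onI)
          fix x y assume "x \<in> verts G" "y \<in> verts G" "\<psi> x = \<psi> y"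
          then have "idx x = idx y" "x \<in> V" "y \<in> V" by (simp_all add: \<psi>_def V_def)
          then show "x = y" using vv_idx by metis
        qed
        show "\<psi> ` verts G = verts (quot \<phi> G0)"
        proof
          show "\<psi> ` verts G \<subseteq> verts (quot \<phi> G0)" unfolding qV using idx_lt by (auto simp: R_def \<psi>_def V_def)
          show "verts (quot \<phi> G0) \<subseteq> \<psi> ` verts G"
          proof
            fix y assume "y \<in> verts (quot \<phi> G0)"
            then obtain i where i: "i < n" "y = Inl (i, 0)" unfolding qV R_def by auto
            then have "vv i \<in> V" using vvim by auto
            moreover have "\<psi> (vv i) = y" using i idx_vv by (simp add: \<psi>_def)
            ultimately show "y \<in> \<psi> ` verts G" by (auto simp: V_def)
          qed
        qed
      qed
    next
      fix x y assume x: "x \<in> verts G" and y: "y \<in> verts G"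
      then have xV: "x \<in> V" and yV: "y \<in> V" by (auto simp: V_def)
      show "{x, y} \<in> edges G \<longleftrightarrow> {\<psi> x, \<psi> y} \<in> edges (quot \<phi> G0)"
      proof
        assume "{x, y} \<in> edges G"
        then have "{x, y} \<in> E" by (simp add: E_def)
        then obtain j where j: "j < m" "ee j = {x, y}" using ee by (auto simp: bij_betw_def image_iff)
        then have "{x, y} = {vv (a j), vv (b j)}" using abj by simp
        then have "idx ` {x, y} = idx ` {vv (a j), vv (b j)}" by simp
        then have "{idx x, idx y} = {a j, b j}" using idx_vv abj[OF j(1)] by simp
        then have "{\<psi> x, \<psi> y} = {Inl (a j, 0), Inl (b j, 0)}"
          by (auto simp: \<psi>_def doubleton_eq_iff)
        then show "{\<psi> x, \<psi> y} \<in> edges (quot \<phi> G0)" using j qE by auto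
      next
        assume "{\<psi> x, \<psi> y} \<in> edges (quot \<phi> G0)"
        then have "{\<psi> x, \<psi> y} \<in> {{Inl (a j, 0), Inl (b j, 0)} | j. j < m}" by (simp only: qE)
        then obtain j where j: "j < m" "{\<psi> x, \<psi> y} = {Inl (a j, 0), Inl (b j, 0)}" by blast
        then have "{idx x, idx y} = {a j, b j}" by (auto simp: \<psi>_def doubleton_eq_iff)
        then have "vv ` {idx x, idx y} = vv ` {a j, b j}" by simp
        then have "{x, y} = ee j" using vv_idx xV yV abj[OF j(1)] by simp
        moreover have "ee j \<in> E" using ee j(1) by (auto simp: bij_betw_def)
        ultimately show "{x, y} \<in> edges G" by (simp add: E_def)
      qed
    qed
    have "subgraph G0 G0" using fg by (auto simp: subgraph_def finite_graph_def)
    then show ?thesis unfolding minor_def using ct iso by blast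
  qed
  have "\<forall>L\<ge>2. sd Bs Ks s t L" using finB finK stB by (auto simp: sd_def)
  then show ?thesis using finB finK minor deg by blast
qed

theorem corollary20:
  fixes f :: "nat \<Rightarrow> real" and G :: "'a graph"
  assumes "superlinear f"
    and "\<forall>r\<ge>1. f r \<ge> 1 + 3 * real r"
    and "finite_graph G"
  shows "\<exists>G' :: nat graph. finite_graph G' \<and> minor G G' \<and>
           (\<forall>r\<ge>1. real (growth G' r) \<le> f r)"
proof -
  obtain Bs :: "(nat \<times> nat) set" and Ks :: "((nat \<times> nat) + nat) set" and s t where
    H: "finite Bs" "finite Ks" "\<forall>L\<ge>2. sd Bs Ks s t L \<and> minor G (subdiv Bs Ks s t L)"
      "\<forall>b\<in>Bs. card {k\<in>Ks. s k = b} + card {k\<in>Ks. t k = b} \<le> 3"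
    using main_construction[OF assms(3)] by blast
  define C where "C = real (card Bs + 2 * card Ks)"
  have "eventually (\<lambda>x. C \<le> f x / real x) sequentially"
    using assms(1) unfolding superlinear_def filterlim_at_top by blast
  then obtain R where R: "\<And>r. r \<ge> R \<Longrightarrow> C \<le> f r / real r"
    unfolding eventually_sequentially by blast
  define L where "L = 2 * R + 2"
  have L2: "2 \<le> L" by (simp add: L_def)
  interpret sd Bs Ks s t L using H(3) L2 by blast
  have mG: "minor G G0" using H(3) L2 by blast
  define G' where "G' = gmap (to_nat :: ((nat \<times> nat) + ((nat \<times> nat) + nat) \<times> nat) \<Rightarrow> nat) G0"
  have inj: "inj (to_nat :: ((nat \<times> nat) + ((nat \<times> nat) + nat) \<times> nat) \<Rightarrow> nat)" by (rule inj_to_nat)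
  have "finite_graph G'" unfolding G'_def by (rule finite_graph_gmap[OF inj fg])
  moreover have "minor G G'" unfolding G'_def by (rule minor_gmap[OF inj mG])
  moreover have "real (growth G' r) \<le> f r" if r1: "r \<ge> 1" for r
  proof -
    have g1: "growth G' r \<le> growth G0 r" unfolding G'_def by (rule growth_gmap[OF inj fg])
    show ?thesis
    proof (cases "2 * r \<le> L")
      case True
      have "growth G0 r \<le> 1 + 3 * r"
        by (rule growth_le_ball[OF fg]) (use ball[OF H(4) _ True] in blast)
      then have "real (growth G' r) \<le> 1 + 3 * real r" using g1 by linarith
      then show ?thesis using assms(2) r1 by fastforce
    next
      case False
      have g2: "growth G0 r \<le> card Bs + card Ks * L"
        using growth_le_card[OF fg, of r] card_verts by linarith
      have k: "card Ks * L \<le> card Ks * (2 * r)" using False by simp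
      have b: "card Bs \<le> card Bs * r" using r1 by simp
      have "card Bs + card Ks * L \<le> card Bs * r + card Ks * (2 * r)" by (rule add_mono[OF b k])
      also have "\<dots> = (card Bs + 2 * card Ks) * r" by (simp add: algebra_simps)
      finally have "card Bs + card Ks * L \<le> (card Bs + 2 * card Ks) * r" .
      then have "real (growth G' r) \<le> C * real r"
        using g1 g2 unfolding C_def by (metis (mono_tags, lifting) le_trans of_nat_le_iff of_nat_mult)
      moreover have "C \<le> f r / real r" using R False L_def by simp
      then have "C * real r \<le> f r" using r1 by (simp add: pos_le_divide_eq)
      ultimately show ?thesis by linarith
    qed
  qed
  ultimately show ?thesis by blast
qed

end
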